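(* Let $H=(v_1,\dots,v_6)$ be an embedded equilateral hexagon, considered up to translations and rotations, whose action-angle coordinates $(d_1,d_2,d_3,\theta_1,\theta_2,\theta_3)$ for the $T_{135}$ triangulation are defined. If the Joint Chirality-Curl satisfies $J(H)=(1,1)$ or $J(H)=(-1,1)$, then $\theta_i\in(0,\pi)$ for $i=1,2,3$.
   Context: An equilateral hexagon is an ordered 6-tuple $H=(v_1,\dots,v_6)$ in $\mathbb{R}^3$ with $\|v_i-v_{i+1}\|=1$ (indices mod 6), edges $e_i=[v_i,v_{i+1}]$, oriented $v_1\to v_2\to\cdots\to v_6\to v_1$; embedded means non-adjacent edges are disjoint and adjacent ones meet only at their common endpoint. Standard position: $v_1=0$, $v_3$ on the positive $x$-axis, $v_5$ in the $xy$-plane with positive $y$-coordinate. Action-angle coordinates ($T_{135}$ triangulation), defined when $v_1,v_3,v_5$ are not collinear and $0<d_i<2$: $d_1=\|v_3-v_1\|$, $d_2=\|v_5-v_3\|$, $d_3=\|v_1-v_5\|$; with $m_1,m_2,m_3$ the midpoints of $[v_1,v_3],[v_3,v_5],[v_5,v_1]$, $u_1,u_2,u_3$ the unit vectors in the $xy$-plane perpendicular to these segments pointing toward the opposite vertex of triangle $v_1v_3v_5$ (toward $v_5,v_1,v_3$ respectively), and $e_z=(0,0,1)$, the angles $\theta_i\in[0,2\pi)$ are determined by $v_{2i}=m_i+\tfrac12\sqrt{4-d_i^2}(\cos\theta_i\,u_i+\sin\theta_i\,e_z)$ (regular planar hexagon: all $\theta_i=\pi$). Joint Chirality-Curl: $curl(H)=\operatorname{sign}\big((v_3-v_1)\times(v_5-v_1)\cdot(v_2-v_1)\big)$.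 For $i=2,4,6$, $T_i$ is the open triangular disk with vertices $v_{i-1},v_i,v_{i+1}$, oriented by the right-hand rule (normal $(v_i-v_{i-1})\times(v_{i+1}-v_i)$), and $\Delta_i$ is the algebraic intersection number of $T_i$ with the oriented polygon $H$. Then $J(H)=(\Delta_2\Delta_4\Delta_6,\ \Delta_2^2\Delta_4^2\Delta_6^2\,curl(H))$. (By Calvo, $J(H)=(1,c)$ iff $H$ is a right-handed trefoil with curl $c$, $(-1,c)$ iff left-handed trefoil with curl $c$, $(0,0)$ iff unknot.) *)

theory Defs
  imports "HOL-Analysis.Analysis" "HOL-Analysis.Cross3"
begin

type_synonym hexagon = "nat \<Rightarrow> real^3"
  \<comment> \<open>A hexagon H is given by its vertices v_i = H i for i = 1..6; other values are irrelevant.\<close>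

definition nxt :: "nat \<Rightarrow> nat" where
  "nxt j = (if j = 6 then 1 else j + 1)"

definition edge :: "hexagon \<Rightarrow> nat \<Rightarrow> (real^3) set" where
  "edge H j = closed_segment (H j) (H (nxt j))"

definition equilateral_hexagon :: "hexagon \<Rightarrow> bool" where
  "equilateral_hexagon H \<longleftrightarrow> (\<forall>j\<in>{1..6}. dist (H j) (H (nxt j)) = 1)"

definition embedded_hexagon :: "hexagon \<Rightarrow> bool" where
  "embedded_hexagon H \<longleftrightarrow>
     (\<forall>j\<in>{1..6}. \<forall>k\<in>{1..6}. j \<noteq> k \<longrightarrow>
        (if k = nxt j then edge H j \<inter> edge H k = {H k}
         else if j = nxt k then edge H j \<inter> edge H k = {H j}
         else edge H j \<inter> edge H k = {}))"

definition tri_disk :: "hexagon \<Rightarrow> nat \<Rightarrow> (real^3) set" where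
  "tri_disk H i = rel_interior (convex hull {H (i - 1), H i, H (nxt i)})"

definition tri_normal :: "hexagon \<Rightarrow> nat \<Rightarrow> real^3" where
  "tri_normal H i = cross3 (H i - H (i - 1)) (H (nxt i) - H i)"

text \<open>Local weight of a crossing at parameter s of an edge: interior crossings count 1,
  crossings at an endpoint count 1/2 (so a crossing through a vertex is counted once
  in total by the two edges sharing it, and a touching vertex contributes 0).\<close>
definition cross_weight :: "real \<Rightarrow> real" where
  "cross_weight s = (if 0 < s \<and> s < 1 then 1 else if s = 0 \<or> s = 1 then 1/2 else 0)"

text \<open>Signed contribution of edge e_j = [v_j, v_(j+1)] to the algebraic intersection
  number of the oriented triangle T_i with the oriented polygon.\<close>
definition edge_contrib :: "hexagon \<Rightarrow> nat \<Rightarrow> nat \<Rightarrow> real" where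
  "edge_contrib H i j =
    (let a = H j; b = H (nxt j); N = tri_normal H i; \<delta> = (b - a) \<bullet> N in
     if \<delta> = 0 then 0 else
       (let s = ((H i - a) \<bullet> N) / \<delta>; p = a + s *\<^sub>R (b - a) in
        if p \<in> tri_disk H i then sgn \<delta> * cross_weight s else 0))"

definition Delta :: "hexagon \<Rightarrow> nat \<Rightarrow> real" where
  "Delta H i = (\<Sum>j\<in>{1..6}. edge_contrib H i j)"

definition curl :: "hexagon \<Rightarrow> real" where
  "curl H = sgn ((cross3 (H 3 - H 1) (H 5 - H 1)) \<bullet> (H 2 - H 1))"

definition JCC :: "hexagon \<Rightarrow> real \<times> real" where
  "JCC H = (Delta H 2 * Delta H 4 * Delta H 6,
            (Delta H 2)\<^sup>2 * (Delta H 4)\<^sup>2 * (Delta H 6)\<^sup>2 * curl H)"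

definition standard_position :: "hexagon \<Rightarrow> bool" where
  "standard_position G \<longleftrightarrow>
     G 1 = 0 \<and> G 3 $ 1 > 0 \<and> G 3 $ 2 = 0 \<and> G 3 $ 3 = 0 \<and>
     G 5 $ 2 > 0 \<and> G 5 $ 3 = 0"

definition perp_unit :: "real^3 \<Rightarrow> real^3 \<Rightarrow> real^3 \<Rightarrow> real^3" where
  "perp_unit a b c =
    (let m = midpoint a b; w = (c - m) - (((c - m) \<bullet> (b - a)) / ((b - a) \<bullet> (b - a))) *\<^sub>R (b - a)
     in (1 / norm w) *\<^sub>R w)"

text \<open>theta is the dihedral angle of the vertex p over the diagonal [a,b] (opposite vertex c):
  p = m + (1/2) sqrt(4 - d^2) (cos theta u + sin theta e_z), theta in [0, 2 pi).\<close>
definition is_aa_angle :: "real^3 \<Rightarrow> real^3 \<Rightarrow> real^3 \<Rightarrow> real^3 \<Rightarrow> real \<Rightarrow> bool" where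
  "is_aa_angle a b c p \<theta> \<longleftrightarrow>
     0 \<le> \<theta> \<and> \<theta> < 2 * pi \<and>
     p = midpoint a b + ((1/2) * sqrt (4 - (dist a b)\<^sup>2)) *\<^sub>R
           (cos \<theta> *\<^sub>R perp_unit a b c + sin \<theta> *\<^sub>R axis 3 1)"

end

theory Submission
  imports Defs
begin

lemma orth_dot:
  fixes R :: "real^'n^'n"
  assumes "orthogonal_matrix R"
  shows "(R *v x) \<bullet> (R *v y) = x \<bullet> y"
proof -
  have "orthogonal_transformation (\<lambda>x. R *v x)"
    using assms by (simp add: orthogonal_transformation_matrix)
  then show ?thesis by (simp add: orthogonal_transformation_def)
qed

lemma disk_inv:
  fixes R :: "real^3^3"
  assumes "orthogonal_matrix R"
    and "G (i-1) = R *v H (i-1) + t" "G i = R *v H i + t" "G (nxt i) = R *v H (nxt i) + t"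
  shows "tri_disk G i = (\<lambda>x. R *v x + t) ` tri_disk H i"
proof -
  let ?L = "\<lambda>x. R *v x"
  have lin: "linear ?L" by (simp add: matrix_vector_mul_linear)
  have inj: "inj ?L"
    using assms(1) by (metis (no_types, lifting) injI orthogonal_matrix_def matrix_vector_mul_assoc matrix_vector_mul_lid)
  have bl: "bounded_linear ?L" using lin by (simp add: linear_linear)
  have eq: "{G (i-1), G i, G (nxt i)} = (\<lambda>x. t + x) ` (?L ` {H (i-1), H i, H (nxt i)})"
    using assms by (simp add: add.commute)
  have "tri_disk G i = rel_interior ((\<lambda>x. t + x) ` (?L ` (convex hull {H (i-1), H i, H (nxt i)})))"
    unfolding tri_disk_def eq convex_hull_translation convex_hull_linear_image[OF lin] by simp
  also have "\<dots> = (\<lambda>x. t + x) ` (?L ` tri_disk H i)"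
    unfolding rel_interior_translation rel_interior_injective_linear_image[OF bl inj] tri_disk_def by simp
  finally show ?thesis by (simp add: image_image add.commute)
qed

lemma ri_pos:
  fixes w :: "real^3"
  assumes p: "p \<in> rel_interior (convex hull {a, b, c})"
    and "w \<bullet> a \<ge> k" "w \<bullet> b \<ge> k" "w \<bullet> c \<ge> k"
    and "w \<bullet> a > k \<or> w \<bullet> b > k \<or> w \<bullet> c > k"
  shows "w \<bullet> p > k"
proof -
  let ?S = "convex hull {a, b, c}"
  have sub: "?S \<subseteq> {x. w \<bullet> x \<ge> k}"
    by (rule hull_minimal) (use assms in \<open>auto simp: convex_halfspace_ge\<close>)
  have F: "(?S \<inter> {x. w \<bullet> x = k}) face_of ?S"
    by (rule face_of_Int_supporting_hyperplane_ge) (use sub in \<open>auto simp: convex_convex_hull\<close>)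
  have ne: "?S \<inter> {x. w \<bullet> x = k} \<noteq> ?S"
  proof -
    have "a \<in> ?S" "b \<in> ?S" "c \<in> ?S" by (auto intro: hull_inc)
    then show ?thesis using assms(5) by auto
  qed
  have "p \<in> ?S" using p rel_interior_subset by blast
  moreover have "p \<notin> ?S \<inter> {x. w \<bullet> x = k}"
    using face_of_disjoint_rel_interior[OF F ne] p by blast
  ultimately show ?thesis using sub by force
qed

lemma vert_not_ri:
  fixes a b c :: "real^3"
  assumes "dist c a = dist c b" "a \<noteq> b"
  shows "a \<notin> rel_interior (convex hull {a, c, b})"
proof
  assume a: "a \<in> rel_interior (convex hull {a, c, b})"
  let ?w = "b - a"
  have "(norm (c - a))\<^sup>2 = (norm (c - b))\<^sup>2" using assms(1) by (simp add: dist_norm)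
  hence "(c - a) \<bullet> (c - a) = (c - b) \<bullet> (c - b)" by (simp add: power2_norm_eq_inner)
  hence h: "2 * (?w \<bullet> (c - a)) = ?w \<bullet> ?w"
    by (simp add: inner_diff_left inner_diff_right inner_commute algebra_simps)
  have pos: "?w \<bullet> ?w > 0" using assms(2) by simp
  have "?w \<bullet> a < ?w \<bullet> a"
  proof (rule ri_pos[OF a])
    show "?w \<bullet> a \<le> ?w \<bullet> a" by simp
    show "?w \<bullet> a \<le> ?w \<bullet> c" using h pos by (simp add: inner_diff_right)
    show "?w \<bullet> a \<le> ?w \<bullet> b" using pos by (simp add: inner_diff_right inner_diff_left inner_commute)
    show "?w \<bullet> a < ?w \<bullet> a \<or> ?w \<bullet> c > ?w \<bullet> a \<or> ?w \<bullet> b > ?w \<bullet> a"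
      using pos by (simp add: inner_diff_right inner_diff_left inner_commute)
  qed
  then show False by simp
qed

lemma vert_not_ri2:
  fixes a b c :: "real^3"
  assumes "dist c a = dist c b" "a \<noteq> b"
  shows "b \<notin> rel_interior (convex hull {a, c, b})"
proof -
  have "{a, c, b} = {b, c, a}" by auto
  then show ?thesis using vert_not_ri[of c b a] assms by auto
qed


lemma ec_inv:
  fixes R :: "real^3^3"
  assumes R: "orthogonal_matrix R" "det R = 1"
    and g: "\<And>k. k \<in> {i-1, i, nxt i, j, nxt j} \<Longrightarrow> G k = R *v H k + t"
  shows "edge_contrib G i j = edge_contrib H i j"
proof -
  have rot: "rotation_matrix R" using R by (simp add: rotation_matrix_def)
  have dsk: "tri_disk G i = (\<lambda>x. R *v x + t) ` tri_disk H i"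
    by (rule disk_inv) (use R g in auto)
  have inj: "inj (\<lambda>x. R *v x + t)"
    using R(1) unfolding inj_def
    by (metis (no_types, lifting) add_right_cancel orthogonal_matrix_def matrix_vector_mul_assoc matrix_vector_mul_lid)
  have N: "tri_normal G i = R *v tri_normal H i"
    unfolding tri_normal_def using g
    by (simp add: matrix_vector_mult_diff_distrib[symmetric] cross_rotation_matrix[OF rot])
  define a where "a = H j"
  define b where "b = H (nxt j)"
  define NN where "NN = tri_normal H i"
  have ga: "G j = R *v a + t" and gb: "G (nxt j) = R *v b + t" and gi: "G i = R *v H i + t"
    using g by (auto simp: a_def b_def)
  have d: "(G (nxt j) - G j) \<bullet> tri_normal G i = (b - a) \<bullet> NN"
    unfolding ga gb N NN_def by (simp add: matrix_vector_mult_diff_distrib[symmetric] orth_dot[OF R(1)])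
  have n: "(G i - G j) \<bullet> tri_normal G i = (H i - a) \<bullet> NN"
    unfolding ga gi N NN_def by (simp add: matrix_vector_mult_diff_distrib[symmetric] orth_dot[OF R(1)])
  have p: "G j + sc *\<^sub>R (G (nxt j) - G j) = R *v (a + sc *\<^sub>R (b - a)) + t" for sc
    unfolding ga gb by (simp add: matrix_vector_right_distrib matrix_vector_mult_diff_distrib
        matrix_vector_mult_scaleR algebra_simps)
  have mem: "R *v x + t \<in> tri_disk G i \<longleftrightarrow> x \<in> tri_disk H i" for x
    unfolding dsk using inj_image_mem_iff[OF inj, of x] by simp
  show ?thesis
    unfolding edge_contrib_def Let_def d n p mem
    by (simp add: a_def b_def NN_def)
qed

lemma ec_plane1:
  assumes "nxt (i-1) = i"
  shows "edge_contrib G i (i-1) = 0"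
  unfolding edge_contrib_def tri_normal_def Let_def using assms by (simp add: dot_cross_self)

lemma ec_plane2: "edge_contrib G i i = 0"
  unfolding edge_contrib_def tri_normal_def Let_def by (simp add: dot_cross_self)

lemma ec_zero_side:
  fixes w :: "real^3"
  assumes "w \<bullet> G i > 0" "w \<bullet> G (i-1) = 0" "w \<bullet> G (nxt i) = 0"
    "w \<bullet> G j \<le> 0" "w \<bullet> G (nxt j) \<le> 0"
  shows "edge_contrib G i j = 0"
proof -
  define a where "a = G j"
  define b where "b = G (nxt j)"
  define NN where "NN = tri_normal G i"
  define sc where "sc = ((G i - a) \<bullet> NN) / ((b - a) \<bullet> NN)"
  have key: "sgn ((b - a) \<bullet> NN) * cross_weight sc = 0" if pd: "a + sc *\<^sub>R (b - a) \<in> tri_disk G i"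
  proof (cases "0 \<le> sc \<and> sc \<le> 1")
    case True
    have "w \<bullet> (a + sc *\<^sub>R (b - a)) > 0"
      using ri_pos[where w=w and a="G (i-1)" and b="G i" and c="G (nxt i)" and k=0] pd assms unfolding tri_disk_def by auto
    moreover have "w \<bullet> (a + sc *\<^sub>R (b - a)) = (1 - sc) * (w \<bullet> a) + sc * (w \<bullet> b)"
      by (simp add: inner_add_right inner_diff_right algebra_simps)
    moreover have "(1 - sc) * (w \<bullet> a) \<le> 0" "sc * (w \<bullet> b) \<le> 0"
      using True assms by (auto simp: a_def b_def mult_nonneg_nonpos)
    ultimately show ?thesis by linarith
  next
    case False
    then show ?thesis by (auto simp: cross_weight_def)
  qed
  show ?thesis
    unfolding edge_contrib_def Let_def using key
    by (auto simp: a_def b_def NN_def sc_def)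
qed


lemma normal_flat:
  assumes "G i $ 3 = 0" "G (i-1) $ 3 = 0" "G (nxt i) $ 3 = 0"
  shows "x \<bullet> tri_normal G i = x $ 3 * tri_normal G i $ 3"
  using assms unfolding tri_normal_def by (simp add: cross3_simps)

lemma ec_flat_start:
  assumes "G i $ 3 = 0" "G (i-1) $ 3 = 0" "G (nxt i) $ 3 = 0" "G j $ 3 = 0"
  shows "edge_contrib G i j = (if G j \<in> tri_disk G i
           then sgn (G (nxt j) $ 3 * tri_normal G i $ 3) / 2 else 0)"
proof -
  note nf = normal_flat[OF assms(1-3)]
  show ?thesis
    unfolding edge_contrib_def Let_def nf using assms(1,4)
    by (auto simp: cross_weight_def)
qed

lemma ec_flat_end:
  assumes "G i $ 3 = 0" "G (i-1) $ 3 = 0" "G (nxt i) $ 3 = 0" "G (nxt j) $ 3 = 0"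
  shows "edge_contrib G i j = (if G (nxt j) \<in> tri_disk G i
           then sgn (- G j $ 3 * tri_normal G i $ 3) / 2 else 0)"
proof -
  note nf = normal_flat[OF assms(1-3)]
  show ?thesis
    unfolding edge_contrib_def Let_def nf using assms(1,4)
    by (auto simp: cross_weight_def algebra_simps)
qed


lemma Delta_expand: "Delta G i = edge_contrib G i 1 + edge_contrib G i 2 + edge_contrib G i 3
   + edge_contrib G i 4 + edge_contrib G i 5 + edge_contrib G i 6"
proof -
  have "{1..6::nat} = {1,2,3,4,5,6}" by auto
  then show ?thesis unfolding Delta_def by (simp add: algebra_simps)
qed

lemma nxt_vals: "nxt 1 = 2" "nxt (Suc 0) = 2" "nxt 2 = 3" "nxt 3 = 4" "nxt 4 = 5" "nxt 5 = 6" "nxt 6 = 1"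
  by (auto simp: nxt_def)

lemma D2_side:
  fixes w :: "real^3"
  assumes "w \<bullet> G 1 = 0" "w \<bullet> G 3 = 0" "w \<bullet> G 5 = 0" "w \<bullet> G 2 > 0" "w \<bullet> G 4 \<le> 0" "w \<bullet> G 6 \<le> 0"
  shows "Delta G 2 = 0"
proof -
  have "edge_contrib G 2 1 = 0" using ec_plane1[of 2 G] by (simp add: nxt_vals)
  moreover have "edge_contrib G 2 2 = 0" by (rule ec_plane2)
  moreover have "edge_contrib G 2 j = 0" if "j \<in> {3,4,5,6}" for j
    using that ec_zero_side[of w G 2 j] assms by (auto simp: nxt_vals)
  ultimately show ?thesis unfolding Delta_expand by simp
qed

lemma D4_side:
  fixes w :: "real^3"
  assumes "w \<bullet> G 1 = 0" "w \<bullet> G 3 = 0" "w \<bullet> G 5 = 0" "w \<bullet> G 4 > 0" "w \<bullet> G 2 \<le> 0" "w \<bullet> G 6 \<le> 0"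
  shows "Delta G 4 = 0"
proof -
  have "edge_contrib G 4 3 = 0" using ec_plane1[of 4 G] by (simp add: nxt_vals)
  moreover have "edge_contrib G 4 4 = 0" by (rule ec_plane2)
  moreover have "edge_contrib G 4 j = 0" if "j \<in> {1,2,5,6}" for j
    using that ec_zero_side[of w G 4 j] assms by (auto simp: nxt_vals)
  ultimately show ?thesis unfolding Delta_expand by simp
qed

lemma D6_side:
  fixes w :: "real^3"
  assumes "w \<bullet> G 1 = 0" "w \<bullet> G 3 = 0" "w \<bullet> G 5 = 0" "w \<bullet> G 6 > 0" "w \<bullet> G 2 \<le> 0" "w \<bullet> G 4 \<le> 0"
  shows "Delta G 6 = 0"
proof -
  have "edge_contrib G 6 5 = 0" using ec_plane1[of 6 G] by (simp add: nxt_vals)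
  moreover have "edge_contrib G 6 6 = 0" by (rule ec_plane2)
  moreover have "edge_contrib G 6 j = 0" if "j \<in> {1,2,3,4}" for j
    using that ec_zero_side[of w G 6 j] assms by (auto simp: nxt_vals)
  ultimately show ?thesis unfolding Delta_expand by simp
qed

lemma D6_flat:
  assumes "G 1 $ 3 = 0" "G 3 $ 3 = 0" "G 5 $ 3 = 0" "G 6 $ 3 = 0" "G 2 $ 3 > 0" "G 4 $ 3 > 0"
    and "dist (G 6) (G 5) = dist (G 6) (G 1)" "G 5 \<noteq> G 1"
  shows "Delta G 6 = 0"
proof -
  have d: "tri_disk G 6 = rel_interior (convex hull {G 5, G 6, G 1})"
    by (simp add: tri_disk_def nxt_vals)
  have n1: "G 1 \<notin> tri_disk G 6" unfolding d using vert_not_ri2[OF assms(7,8)] .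
  have n5: "G 5 \<notin> tri_disk G 6" unfolding d using vert_not_ri[OF assms(7,8)] .
  have f: "G 6 $ 3 = 0" "G (6-1) $ 3 = 0" "G (nxt 6) $ 3 = 0" using assms by (auto simp: nxt_vals)
  have e1: "edge_contrib G 6 1 = 0" using ec_flat_start[OF f, of 1] n1 assms by simp
  have e4: "edge_contrib G 6 4 = 0" using ec_flat_end[OF f, of 4] n5 assms by (simp add: nxt_vals)
  have e5: "edge_contrib G 6 5 = 0" using ec_plane1[of 6 G] by (simp add: nxt_vals)
  have e6: "edge_contrib G 6 6 = 0" by (rule ec_plane2)
  have e2: "edge_contrib G 6 2 = (if G 3 \<in> tri_disk G 6 then sgn (- G 2 $ 3 * tri_normal G 6 $ 3) / 2 else 0)"
    using ec_flat_end[OF f, of 2] assms by (simp add: nxt_vals)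
  have e3: "edge_contrib G 6 3 = (if G 3 \<in> tri_disk G 6 then sgn (G 4 $ 3 * tri_normal G 6 $ 3) / 2 else 0)"
    using ec_flat_start[OF f, of 3] assms by (simp add: nxt_vals)
  show ?thesis unfolding Delta_expand e1 e2 e3 e4 e5 e6 using assms(5,6)
    by (simp add: sgn_mult)
qed

lemma D4_flat:
  assumes "G 1 $ 3 = 0" "G 3 $ 3 = 0" "G 5 $ 3 = 0" "G 4 $ 3 = 0" "G 2 $ 3 > 0" "G 6 $ 3 > 0"
    and "dist (G 4) (G 3) = dist (G 4) (G 5)" "G 3 \<noteq> G 5"
  shows "Delta G 4 = 0"
proof -
  have d: "tri_disk G 4 = rel_interior (convex hull {G 3, G 4, G 5})"
    by (simp add: tri_disk_def nxt_vals)
  have n3: "G 3 \<notin> tri_disk G 4" unfolding d using vert_not_ri[OF assms(7,8)] .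
  have n5: "G 5 \<notin> tri_disk G 4" unfolding d using vert_not_ri2[OF assms(7,8)] .
  have f: "G 4 $ 3 = 0" "G (4-1) $ 3 = 0" "G (nxt 4) $ 3 = 0" using assms by (auto simp: nxt_vals)
  have e5: "edge_contrib G 4 5 = 0" using ec_flat_start[OF f, of 5] n5 assms by simp
  have e2: "edge_contrib G 4 2 = 0" using ec_flat_end[OF f, of 2] n3 assms by (simp add: nxt_vals)
  have e3: "edge_contrib G 4 3 = 0" using ec_plane1[of 4 G] by (simp add: nxt_vals)
  have e4: "edge_contrib G 4 4 = 0" by (rule ec_plane2)
  have e6: "edge_contrib G 4 6 = (if G 1 \<in> tri_disk G 4 then sgn (- G 6 $ 3 * tri_normal G 4 $ 3) / 2 else 0)"
    using ec_flat_end[OF f, of 6] assms by (simp add: nxt_vals)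
  have e1: "edge_contrib G 4 1 = (if G 1 \<in> tri_disk G 4 then sgn (G 2 $ 3 * tri_normal G 4 $ 3) / 2 else 0)"
    using ec_flat_start[OF f, of 1] assms by (simp add: nxt_vals)
  show ?thesis unfolding Delta_expand e1 e2 e3 e4 e5 e6 using assms(5,6)
    by (simp add: sgn_mult)
qed

lemma perp_unit_z:
  assumes "a $ 3 = 0" "b $ 3 = 0" "c $ 3 = 0"
  shows "perp_unit a b c $ 3 = 0"
  using assms unfolding perp_unit_def Let_def midpoint_def by simp

lemma aa_z:
  assumes "is_aa_angle a b c p \<theta>" "a $ 3 = 0" "b $ 3 = 0" "c $ 3 = 0" "dist a b < 2" "p $ 3 > 0"
  shows "\<theta> \<in> {0<..<pi}"
proof -
  have th: "0 \<le> \<theta>" "\<theta> < 2 * pi" and p: "p = midpoint a b + ((1/2) * sqrt (4 - (dist a b)\<^sup>2)) *\<^sub>R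
           (cos \<theta> *\<^sub>R perp_unit a b c + sin \<theta> *\<^sub>R axis 3 1)"
    using assms(1) unfolding is_aa_angle_def by auto
  have "p $ 3 = ((1/2) * sqrt (4 - (dist a b)\<^sup>2)) * sin \<theta>"
    using perp_unit_z[OF assms(2-4)] assms(2,3) unfolding p midpoint_def by (simp add: axis_def)
  moreover have "sqrt (4 - (dist a b)\<^sup>2) > 0"
  proof -
    have "(dist a b)\<^sup>2 < 2\<^sup>2" using assms(5) by (intro power_strict_mono) auto
    then show ?thesis by simp
  qed
  ultimately have s: "sin \<theta> > 0" using assms(6)
    by (metis half_gt_zero_iff times_divide_eq_left mult_1 zero_less_mult_iff order_less_asym)
  have "\<theta> \<noteq> 0" using s by auto
  moreover have "\<theta> < pi"
  proof (rule ccontr)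
    assume "\<not> \<theta> < pi"
    then have "sin (\<theta> - pi) \<ge> 0" using th by (intro sin_ge_zero) auto
    then have "sin \<theta> \<le> 0" by (simp add: sin_diff)
    then show False using s by simp
  qed
  ultimately show ?thesis using th by auto
qed


lemma Delta_inv:
  fixes R :: "real^3^3"
  assumes R: "orthogonal_matrix R" "det R = 1"
    and g: "\<forall>j\<in>{1..6}. G j = R *v H j + t" and i: "i \<in> {2,4,6}"
  shows "Delta G i = Delta H i"
  unfolding Delta_def
proof (rule sum.cong[OF refl])
  fix j assume j: "j \<in> {1..6::nat}"
  show "edge_contrib G i j = edge_contrib H i j"
  proof (rule ec_inv[OF R])
    fix k assume "k \<in> {i - 1, i, nxt i, j, nxt j}"
    then have "k \<in> {1..6}" using i j by (auto simp: nxt_def)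
    then show "G k = R *v H k + t" using g by blast
  qed
qed

lemma curl_inv:
  fixes R :: "real^3^3"
  assumes R: "orthogonal_matrix R" "det R = 1"
    and g: "\<forall>j\<in>{1..6}. G j = R *v H j + t"
  shows "curl G = curl H"
proof -
  have rot: "rotation_matrix R" using R by (simp add: rotation_matrix_def)
  have d: "G a - G b = R *v (H a - H b)" if "a \<in> {1..6}" "b \<in> {1..6}" for a b
    using g that by (simp add: matrix_vector_mult_diff_distrib)
  show ?thesis unfolding curl_def
    by (simp add: d cross_rotation_matrix[OF rot] orth_dot[OF R(1)])
qed

lemma dist_inv:
  fixes R :: "real^3^3"
  assumes R: "orthogonal_matrix R"
    and g: "\<forall>j\<in>{1..6}. G j = R *v H j + t" and "a \<in> {1..6}" "b \<in> {1..6}"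
  shows "dist (G a) (G b) = dist (H a) (H b)"
proof -
  have "G a - G b = R *v (H a - H b)"
    using g assms by (simp add: matrix_vector_mult_diff_distrib)
  then show ?thesis
    by (simp add: dist_norm norm_eq_sqrt_inner orth_dot[OF R])
qed

lemma inner_e3: "axis 3 1 \<bullet> (x::real^3) = x $ 3" "(- axis 3 1) \<bullet> (x::real^3) = - x $ 3"
  by (simp_all add: inner_axis')

theorem mainTheorem2:
  fixes H G :: hexagon and R :: "real^3^3" and t :: "real^3"
    and \<theta>1 \<theta>2 \<theta>3 :: real
  assumes "equilateral_hexagon H" and "embedded_hexagon H"
    and "orthogonal_matrix R" and "det R = 1"
    and "\<forall>j\<in>{1..6}. G j = R *v H j + t"
    and "standard_position G"
    and "\<not> collinear {G 1, G 3, G 5}"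
    and "0 < dist (G 1) (G 3)" and "dist (G 1) (G 3) < 2"
    and "0 < dist (G 3) (G 5)" and "dist (G 3) (G 5) < 2"
    and "0 < dist (G 5) (G 1)" and "dist (G 5) (G 1) < 2"
    and "is_aa_angle (G 1) (G 3) (G 5) (G 2) \<theta>1"
    and "is_aa_angle (G 3) (G 5) (G 1) (G 4) \<theta>2"
    and "is_aa_angle (G 5) (G 1) (G 3) (G 6) \<theta>3"
    and "JCC H = (1, 1) \<or> JCC H = (-1, 1)"
  shows "\<theta>1 \<in> {0<..<pi} \<and> \<theta>2 \<in> {0<..<pi} \<and> \<theta>3 \<in> {0<..<pi}"
proof -
  note g = assms(5)
  have sp: "G 1 = 0" "G 3 $ 1 > 0" "G 3 $ 2 = 0" "G 3 $ 3 = 0" "G 5 $ 2 > 0" "G 5 $ 3 = 0"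
    using assms(6) unfolding standard_position_def by auto
  have z1: "G 1 $ 3 = 0" using sp by simp
  have D: "Delta G i = Delta H i" if "i \<in> {2,4,6}" for i
    using Delta_inv[OF assms(3,4) g that] .
  have C: "curl G = curl H" using curl_inv[OF assms(3,4) g] .
  have eq: "dist (H j) (H (nxt j)) = 1" if "j \<in> {1..6}" for j
    using assms(1) that unfolding equilateral_hexagon_def by blast
  have dG: "dist (G j) (G k) = dist (H j) (H k)" if "j \<in> {1..6}" "k \<in> {1..6}" for j k
    using dist_inv[OF assms(3) g that] .
  have snd: "(Delta H 2)\<^sup>2 * (Delta H 4)\<^sup>2 * (Delta H 6)\<^sup>2 * curl H = 1"
    using assms(17) unfolding JCC_def by auto
  have nz: "Delta G 2 \<noteq> 0" "Delta G 4 \<noteq> 0" "Delta G 6 \<noteq> 0"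
    using snd D by auto
  have cpos: "curl G > 0"
  proof (rule ccontr)
    assume "\<not> curl G > 0"
    then have "(Delta H 2)\<^sup>2 * (Delta H 4)\<^sup>2 * (Delta H 6)\<^sup>2 * curl H \<le> 0"
      using C by (intro mult_nonneg_nonpos) auto
    then show False using snd by simp
  qed
  have trip: "(cross3 (G 3 - G 1) (G 5 - G 1)) \<bullet> (G 2 - G 1) = G 3 $ 1 * G 5 $ 2 * G 2 $ 3"
    using sp by (simp add: cross3_simps)
  have "G 3 $ 1 * G 5 $ 2 * G 2 $ 3 > 0"
    using cpos unfolding curl_def trip by (simp add: sgn_greater)
  then have z2: "G 2 $ 3 > 0" using sp
    by (metis mult_pos_pos zero_less_mult_iff order_less_asym)
  have A: "G 4 $ 3 > 0 \<or> G 6 $ 3 > 0"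
  proof (rule ccontr)
    assume "\<not> ?thesis"
    then have "Delta G 2 = 0" using z2 sp z1
      by (intro D2_side[where w="axis 3 1"]) (auto simp: inner_e3)
    then show False using nz by simp
  qed
  have B1: "\<not> (G 6 $ 3 < 0 \<and> G 4 $ 3 \<ge> 0)"
  proof
    assume h: "G 6 $ 3 < 0 \<and> G 4 $ 3 \<ge> 0"
    then have "Delta G 6 = 0" using z2 sp z1
      by (intro D6_side[where w="- axis 3 1"]) (auto simp: inner_e3)
    then show False using nz by simp
  qed
  have B2: "\<not> (G 4 $ 3 < 0 \<and> G 6 $ 3 \<ge> 0)"
  proof
    assume h: "G 4 $ 3 < 0 \<and> G 6 $ 3 \<ge> 0"
    then have "Delta G 4 = 0" using z2 sp z1
      by (intro D4_side[where w="- axis 3 1"]) (auto simp: inner_e3)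
    then show False using nz by simp
  qed
  have d65: "dist (G 6) (G 5) = dist (G 6) (G 1)"
    using dG[of 6 5] dG[of 6 1] eq[of 5] eq[of 6] by (simp add: nxt_vals dist_commute)
  have d43: "dist (G 4) (G 3) = dist (G 4) (G 5)"
    using dG[of 4 3] dG[of 4 5] eq[of 3] eq[of 4] by (simp add: nxt_vals dist_commute)
  have n51: "G 5 \<noteq> G 1" using assms(12) by auto
  have n35: "G 3 \<noteq> G 5" using assms(10) by auto
  have z4: "G 4 $ 3 > 0" and z6: "G 6 $ 3 > 0"
  proof -
    have F6: "G 6 $ 3 \<noteq> 0" if "G 4 $ 3 > 0"
    proof
      assume "G 6 $ 3 = 0"
      then have "Delta G 6 = 0" using D6_flat[OF z1 sp(4) sp(6) _ z2 that d65 n51] by simp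
      then show False using nz by simp
    qed
    have F4: "G 4 $ 3 \<noteq> 0" if "G 6 $ 3 > 0"
    proof
      assume "G 4 $ 3 = 0"
      then have "Delta G 4 = 0" using D4_flat[OF z1 sp(4) sp(6) _ z2 that d43 n35] by simp
      then show False using nz by simp
    qed
    have "G 4 $ 3 > 0 \<and> G 6 $ 3 > 0"
      using A B1 B2 F4 F6 by fastforce
    then show "G 4 $ 3 > 0" "G 6 $ 3 > 0" by auto
  qed
  have t1: "\<theta>1 \<in> {0<..<pi}" using aa_z[OF assms(14) z1 sp(4) sp(6) assms(9) z2] .
  have t2: "\<theta>2 \<in> {0<..<pi}" using aa_z[OF assms(15) sp(4) sp(6) z1 assms(11) z4] .
  have t3: "\<theta>3 \<in> {0<..<pi}" using aa_z[OF assms(16) sp(6) z1 sp(4) assms(13) z6] .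
  show ?thesis using t1 t2 t3 by blast
qed

end
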